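(* If $n>0$ then $v_{2l-1}=v_{2l}=l$ for all $l=1,\dots,n$.
   Context: $k$ is a field of characteristic zero, $\mathcal O_n=k[x]/(x^{n+1})$, elements of $\mathcal O_n$ identified with multiplication operators, $\operatorname{ad}_x(\delta)=x\delta-\delta x$. The order filtration is $\mathcal D^p(\mathcal O_n)=\{\delta\in\operatorname{End}_k(\mathcal O_n):[f_0,[f_1,\dots,[f_p,\delta]\dots]]=0\ \forall f_i\in\mathcal O_n\}$. For $\delta\in\mathcal D^p(\mathcal O_n)$, $\operatorname{ad}_x^p(\delta)$ is multiplication by an element of $\mathcal O_n$ and $\operatorname{ad}_x^p:\mathcal D^p(\mathcal O_n)\to\mathcal O_n$ is $\mathcal O_n$-linear, so its image is an ideal $(x^{v_p})$ of $\mathcal O_n$; $v_p\in\{0,\dots,n\}$ denotes the corresponding exponent. *)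

theory Defs
  imports "HOL-Computational_Algebra.Polynomial"
begin

text \<open>O_n = k[x]/(x^(n+1)) is modelled by the polynomials of degree at most n
(basis 1, x, ..., x^n); the product is the truncated product.\<close>

definition On :: "nat \<Rightarrow> 'k::field poly set" where
  "On n = {p. degree p \<le> n}"

definition mulO :: "nat \<Rightarrow> 'k::field poly \<Rightarrow> 'k poly \<Rightarrow> 'k poly" where
  "mulO n f g = (f * g) mod monom 1 (n + 1)"

text \<open>End_k(O_n): k-linear maps O_n -> O_n, represented extensionally
(value 0 outside O_n) so that equality of maps is equality of functions.\<close>

definition EndO :: "nat \<Rightarrow> ('k::field poly \<Rightarrow> 'k poly) set" where
  "EndO n = {d. (\<forall>p\<in>On n. d p \<in> On n)
              \<and> (\<forall>p\<in>On n. \<forall>q\<in>On n. d (p + q) = d p + d q)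
              \<and> (\<forall>c. \<forall>p\<in>On n. d (smult c p) = smult c (d p))
              \<and> (\<forall>p. p \<notin> On n \<longrightarrow> d p = 0)}"

definition M :: "nat \<Rightarrow> 'k::field poly \<Rightarrow> ('k poly \<Rightarrow> 'k poly)" where
  "M n f = (\<lambda>p. if p \<in> On n then mulO n f p else 0)"

definition comm :: "('k::field poly \<Rightarrow> 'k poly) \<Rightarrow> ('k poly \<Rightarrow> 'k poly) \<Rightarrow> ('k poly \<Rightarrow> 'k poly)" where
  "comm a b = (\<lambda>p. a (b p) - b (a p))"

definition Dp :: "nat \<Rightarrow> nat \<Rightarrow> ('k::field poly \<Rightarrow> 'k poly) set" where
  "Dp n p = {d \<in> EndO n. \<forall>fs. length fs = p + 1 \<and> set fs \<subseteq> On n \<longrightarrow>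
                 foldr (\<lambda>f e. comm (M n f) e) fs d = (\<lambda>_. 0)}"

definition adx :: "nat \<Rightarrow> ('k::field poly \<Rightarrow> 'k poly) \<Rightarrow> ('k poly \<Rightarrow> 'k poly)" where
  "adx n d = comm (M n [:0, 1:]) d"

definition adx_image :: "nat \<Rightarrow> nat \<Rightarrow> 'k::field poly set" where
  "adx_image n p = {g \<in> On n. \<exists>d \<in> Dp n p. (adx n ^^ p) d = M n g}"

definition idealO :: "nat \<Rightarrow> nat \<Rightarrow> 'k::field poly set" where
  "idealO n v = {mulO n (monom 1 v) h | h. h \<in> On n}"

definition vexp :: "'k::field itself \<Rightarrow> nat \<Rightarrow> nat \<Rightarrow> nat" where
  "vexp TYPE('k) n p = (THE v. v \<le> n \<and> (adx_image n p :: 'k poly set) = idealO n v)"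

end

theory Submission
  imports Defs "HOL-Computational_Algebra.Polynomial"
begin


lemma On_iff: "p \<in> On n \<longleftrightarrow> degree p \<le> n" by (simp add: On_def)

lemma coeff_mod_X: "coeff (q mod monom (1::'k::field) (Suc n)) i = (if i \<le> n then coeff q i else 0)"
proof -
  let ?X = "monom (1::'k) (Suc n)"
  have X0: "?X \<noteq> 0" by simp
  have dX: "degree ?X = Suc n" by (simp add: degree_monom_eq)
  have dm: "q mod ?X = 0 \<or> degree (q mod ?X) < Suc n" using degree_mod_less[OF X0, of q] dX by simp
  have eq: "q = (q div ?X) * ?X + q mod ?X" by (simp add: div_mult_mod_eq)
  show ?thesis
  proof (cases "i \<le> n")
    case True
    have "coeff q i = coeff ((q div ?X) * ?X) i + coeff (q mod ?X) i"
      by (subst eq) (simp only: coeff_add)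
    moreover have "coeff ((q div ?X) * ?X) i = 0"
      using True by (simp add: mult.commute[of _ ?X] coeff_monom_mult)
    ultimately show ?thesis using True by simp
  next
    case False
    then show ?thesis using dm by (auto intro: coeff_eq_0)
  qed
qed

lemma mulO_alt: "mulO n f g = (f * g) mod monom 1 (Suc n)" by (simp add: mulO_def)

lemma coeff_mulO: "coeff (mulO n f g) i = (if i \<le> n then coeff (f * g) i else 0)"
  by (simp add: mulO_alt coeff_mod_X)

lemma On_coeffI: "(\<And>i. n < i \<Longrightarrow> coeff p i = 0) \<Longrightarrow> p \<in> On n"
  by (simp add: On_def degree_le)

lemma mulO_On: "mulO n f g \<in> On n"
  by (rule On_coeffI) (simp add: coeff_mulO)

lemma On_zero[simp]: "0 \<in> On n" by (simp add: On_def)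
lemma On_add: "p \<in> On n \<Longrightarrow> q \<in> On n \<Longrightarrow> p + q \<in> On n"
  by (simp add: On_def degree_add_le)
lemma On_diff: "p \<in> On n \<Longrightarrow> q \<in> On n \<Longrightarrow> p - q \<in> On n"
  by (simp add: On_def degree_diff_le)
lemma On_smult: "p \<in> On n \<Longrightarrow> smult c p \<in> On n"
  by (simp add: On_def)
lemma On_monom: "j \<le> n \<Longrightarrow> monom c j \<in> On n"
  by (simp add: On_def) (meson degree_monom_le order_trans)
lemma On_sum: "(\<And>j. j \<in> S \<Longrightarrow> u j \<in> On n) \<Longrightarrow> sum u S \<in> On n"
  by (induction S rule: infinite_finite_induct) (auto intro: On_add)
lemma monom_notin_On: "n < j \<Longrightarrow> monom (1::'k::field) j \<notin> On n"
  by (simp add: On_def degree_monom_eq)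

lemma mulO_id: "p \<in> On n \<Longrightarrow> (p::'k::field poly) mod monom 1 (Suc n) = p"
  by (rule mod_poly_less) (simp add: On_def degree_monom_eq)



lemma M_On: "M n f q \<in> On n" by (simp add: M_def mulO_On)
lemma M_out: "q \<notin> On n \<Longrightarrow> M n f q = 0" by (simp add: M_def)
lemma M_in: "q \<in> On n \<Longrightarrow> M n f q = mulO n f q" by (simp add: M_def)
lemma M_zero[simp]: "M n f 0 = 0" by (simp add: M_def mulO_def)

lemma M_EndO: "M n (f::'k::field poly) \<in> EndO n"
  unfolding EndO_def
proof (intro CollectI conjI ballI allI impI)
  fix p q :: "'k poly" assume "p \<in> On n" "q \<in> On n"
  then show "M n f (p + q) = M n f p + M n f q"
    by (simp add: M_def On_add mulO_def distrib_left poly_mod_add_left)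
next
  fix c and p :: "'k poly" assume "p \<in> On n"
  then show "M n f (smult c p) = smult c (M n f p)"
    by (simp add: M_def On_smult mulO_def mod_smult_left)
qed (auto simp: M_On M_out)

lemma M_comm: "M n f (M n g q) = M n g (M n f (q::'k::field poly))"
proof (cases "q \<in> On n")
  case True
  then show ?thesis
    by (simp add: M_in mulO_On) (simp add: mulO_def mod_simps ac_simps)
qed (simp add: M_out)

lemma M_mult: "M n f (M n g q) = M n (mulO n f g) (q::'k::field poly)"
proof (cases "q \<in> On n")
  case True
  then show ?thesis
    by (simp add: M_in mulO_On) (simp add: mulO_def mod_simps ac_simps)
qed (simp add: M_out)

lemma EndO_On: "d \<in> EndO n \<Longrightarrow> d p \<in> On n"
  unfolding EndO_def by (cases "p \<in> On n") auto
lemma EndO_out: "d \<in> EndO n \<Longrightarrow> p \<notin> On n \<Longrightarrow> d p = 0"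
  unfolding EndO_def by auto
lemma EndO_add: "d \<in> EndO n \<Longrightarrow> p \<in> On n \<Longrightarrow> q \<in> On n \<Longrightarrow> d (p + q) = d p + d q"
  unfolding EndO_def by auto
lemma EndO_smult: "d \<in> EndO n \<Longrightarrow> p \<in> On n \<Longrightarrow> d (smult c p) = smult c (d p)"
  unfolding EndO_def by auto
lemma EndO_zero: "d \<in> EndO n \<Longrightarrow> d 0 = 0"
  using EndO_smult[of d n 0 0] by simp
lemma EndO_diff: "d \<in> EndO n \<Longrightarrow> p \<in> On n \<Longrightarrow> q \<in> On n \<Longrightarrow> d (p - q) = d p - d q"
proof -
  assume d: "d \<in> EndO n" and p: "p \<in> On n" and q: "q \<in> On n"
  have "d p = d ((p - q) + q)" by simp
  also have "\<dots> = d (p - q) + d q" using d p q by (intro EndO_add) (auto intro: On_diff)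
  finally show ?thesis by simp
qed

lemma EndO_sum: assumes "d \<in> EndO n" "finite S" "\<And>j. j \<in> S \<Longrightarrow> u j \<in> On n" shows
   "d (\<Sum>j\<in>S. smult (w j) (u j)) = (\<Sum>j\<in>S. smult (w j) (d (u j)))"
  using assms(2,3)
proof (induction S rule: finite_induct)
  case empty then show ?case using assms by (simp add: EndO_zero)
next
  case (insert x F)
  have "d (\<Sum>j\<in>insert x F. smult (w j) (u j)) = d (smult (w x) (u x) + (\<Sum>j\<in>F. smult (w j) (u j)))"
    using insert by simp
  also have "\<dots> = d (smult (w x) (u x)) + d (\<Sum>j\<in>F. smult (w j) (u j))"
    using insert assms by (intro EndO_add) (auto intro!: On_smult On_sum)
  also have "\<dots> = smult (w x) (d (u x)) + (\<Sum>j\<in>F. smult (w j) (d (u j)))"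
    using insert assms by (simp add: EndO_smult)
  finally show ?case using insert by simp
qed

lemma comm_EndO:
  fixes a b :: "'k::field poly \<Rightarrow> 'k poly"
  assumes "a \<in> EndO n" "b \<in> EndO n" shows "comm a b \<in> EndO n"
  unfolding EndO_def comm_def
proof (intro CollectI conjI ballI allI impI)
  fix p :: "'k poly" show "p \<in> On n \<Longrightarrow> a (b p) - b (a p) \<in> On n" using assms by (intro On_diff EndO_On)
next
  fix p q :: "'k poly" assume "p \<in> On n" "q \<in> On n"
  then show "a (b (p + q)) - b (a (p + q)) = a (b p) - b (a p) + (a (b q) - b (a q))"
    using assms by (simp add: EndO_add EndO_On)
next
  fix c and p :: "'k poly" assume "p \<in> On n"
  then show "a (b (smult c p)) - b (a (smult c p)) = smult c (a (b p) - b (a p))"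
    using assms by (simp add: EndO_smult EndO_On smult_diff_right)
next
  fix p :: "'k poly" assume "p \<notin> On n"
  then show "a (b p) - b (a p) = 0" using assms by (simp add: EndO_out EndO_zero)
qed

lemma adx_EndO: "d \<in> EndO n \<Longrightarrow> adx n d \<in> EndO n"
  unfolding adx_def by (intro comm_EndO M_EndO)

lemma adx_pow_EndO: "d \<in> EndO n \<Longrightarrow> (adx n ^^ k) d \<in> EndO n"
  by (induction k) (auto intro: adx_EndO)

definition mat :: "('k::field poly \<Rightarrow> 'k poly) \<Rightarrow> nat \<Rightarrow> nat \<Rightarrow> 'k" where
  "mat d i j = coeff (d (monom 1 j)) i"

lemma mat_out_col: "d \<in> EndO n \<Longrightarrow> n < j \<Longrightarrow> mat d i j = 0"
  by (simp add: mat_def EndO_out monom_notin_On)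
lemma mat_out_row: "d \<in> EndO n \<Longrightarrow> n < i \<Longrightarrow> mat d i j = 0"
  unfolding mat_def using EndO_On[of d n "monom 1 j"] by (simp add: On_def coeff_eq_0)

lemma Mx_monom: "j \<le> n \<Longrightarrow> M n [:0,1:] (monom (1::'k::field) j) = (if j < n then monom 1 (Suc j) else 0)"
  by (rule poly_eqI) (auto simp: M_in On_monom coeff_mulO coeff_monom coeff_pCons split: nat.splits)

lemma coeff_Mx: "q \<in> On n \<Longrightarrow> coeff (M n [:0,1:] q) i = (if 0 < i \<and> i \<le> n then coeff q (i - 1) else (0::'k::field))"
  by (auto simp: M_in coeff_mulO coeff_pCons split: nat.splits)

lemma mat_adx:
  assumes d: "d \<in> EndO n"
  shows "mat (adx n d) i j = (if 0 < i \<and> i \<le> n then mat d (i - 1) j else 0) - mat d i (Suc j)"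
proof (cases "j \<le> n")
  case True
  have "d (M n [:0,1:] (monom 1 j)) = d (monom 1 (Suc j))"
    using True d by (auto simp: Mx_monom EndO_zero EndO_out monom_notin_On)
  then show ?thesis using d
    by (simp add: mat_def adx_def comm_def coeff_Mx EndO_On)
next
  case False
  then show ?thesis using d
    by (simp add: mat_def adx_def comm_def EndO_out monom_notin_On M_out EndO_zero)
qed



definition fd :: "(nat \<Rightarrow> 'a::ab_group_add) \<Rightarrow> nat \<Rightarrow> 'a" where
  "fd c = (\<lambda>s. c (Suc s) - c s)"

lemma fd_Suc_right: "(fd ^^ Suc k) c = (fd ^^ k) (fd c)"
  by (simp add: funpow_Suc_right del: funpow.simps)

lemma fd_Suc: "(fd ^^ Suc k) c s = (fd ^^ k) c (Suc s) - (fd ^^ k) c s"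
  by (simp add: fd_def)

lemma fd_local: "(\<And>t. t \<le> k \<Longrightarrow> c (j + t) = c' (j + t)) \<Longrightarrow> (fd ^^ k) c j = (fd ^^ k) c' j"
proof (induction k arbitrary: j)
  case 0 then show ?case using 0[of 0] by simp
next
  case (Suc k)
  have a: "(fd ^^ k) c j = (fd ^^ k) c' j" using Suc by auto
  have b: "(fd ^^ k) c (Suc j) = (fd ^^ k) c' (Suc j)"
    using Suc.IH[of "Suc j"] Suc.prems[of "Suc _"] by auto
  show ?case by (simp only: fd_Suc a b)
qed

lemma fd_zero: "(fd ^^ k) (\<lambda>_. 0::'a::ab_group_add) = (\<lambda>_. 0)"
  by (induction k) (auto simp: fd_def)

lemma fd_low: assumes "\<And>s. s < m \<Longrightarrow> c s = (0::'a::ab_group_add)" "j + k < m"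
  shows "(fd ^^ k) c j = 0"
proof -
  have "(fd ^^ k) c j = (fd ^^ k) (\<lambda>_. 0::'a) j" by (rule fd_local) (use assms in auto)
  then show ?thesis by (simp add: fd_zero)
qed

lemma fd_sum: "(fd ^^ k) (\<lambda>s. \<Sum>t\<in>T. w t * f t s) s = (\<Sum>t\<in>T. w t * (fd ^^ k) (f t) s)"
  for w :: "'b \<Rightarrow> 'a::comm_ring"
proof (induction k arbitrary: s)
  case 0 then show ?case by simp
next
  case (Suc k)
  show ?case by (simp only: fd_Suc Suc) (simp add: sum_subtractf[symmetric] algebra_simps)
qed

lemma fd_shift: "(fd ^^ k) c (Suc s) = (fd ^^ k) (\<lambda>t. c (Suc t)) s"
  by (induction k arbitrary: s) (simp_all add: fd_def)

lemma fd_pow_aux: "(fd ^^ k) (\<lambda>s. (of_nat s :: 'a::field_char_0) ^ i) s = (if i < k then 0 else if i = k then fact k else (fd ^^ k) (\<lambda>s. (of_nat s :: 'a::field_char_0) ^ i) s)"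
proof (induction k arbitrary: i s)
  case 0 then show ?case by simp
next
  case (Suc k)
  have D: "fd (\<lambda>s. (of_nat s :: 'a) ^ i) = (\<lambda>s. \<Sum>t\<in>{..<i}. of_nat (i choose t) * (of_nat s) ^ t)"
  proof
    fix s
    have "(of_nat (Suc s) :: 'a) ^ i = (\<Sum>t\<le>i. of_nat (i choose t) * of_nat s ^ t)"
      using binomial_ring[of "of_nat s :: 'a" 1 i] by (simp add: ac_simps)
    also have "\<dots> = (\<Sum>t<i. of_nat (i choose t) * of_nat s ^ t) + of_nat s ^ i"
      by (simp add: lessThan_Suc_atMost[symmetric])
    finally show "fd (\<lambda>s. (of_nat s :: 'a) ^ i) s = (\<Sum>t\<in>{..<i}. of_nat (i choose t) * (of_nat s) ^ t)"
      by (simp add: fd_def)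
  qed
  have E: "(fd ^^ Suc k) (\<lambda>s. (of_nat s :: 'a) ^ i) s = (\<Sum>t\<in>{..<i}. of_nat (i choose t) * (fd ^^ k) (\<lambda>s. (of_nat s :: 'a) ^ t) s)"
    by (simp only: fd_Suc_right D fd_sum)
  show ?case
  proof (cases "i < Suc k")
    case True
    then have "\<forall>t\<in>{..<i}. (fd ^^ k) (\<lambda>s. (of_nat s :: 'a) ^ t) s = 0"
      using Suc.IH by (metis lessThan_iff order_less_le_trans less_Suc_eq_le)
    then have "(fd ^^ Suc k) (\<lambda>s. (of_nat s :: 'a) ^ i) s = 0" by (simp only: E) simp
    with True show ?thesis by (simp del: funpow.simps)
  next
    case False
    show ?thesis
    proof (cases "i = Suc k")
      case True
      have "(\<Sum>t\<in>{..<i}. of_nat (i choose t) * (fd ^^ k) (\<lambda>s. (of_nat s :: 'a) ^ t) s)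
          = (\<Sum>t\<in>{..<k}. of_nat (i choose t) * (fd ^^ k) (\<lambda>s. (of_nat s :: 'a) ^ t) s) + of_nat (i choose k) * (fd ^^ k) (\<lambda>s. (of_nat s :: 'a) ^ k) s"
        using True by simp
      also have "\<dots> = of_nat (Suc k) * fact k"
      proof -
        have "\<forall>t\<in>{..<k}. (fd ^^ k) (\<lambda>s. (of_nat s :: 'a) ^ t) s = 0"
          using Suc.IH by (metis lessThan_iff)
        then show ?thesis using Suc.IH[of k s] True by simp
      qed
      finally have "(fd ^^ Suc k) (\<lambda>s. (of_nat s :: 'a) ^ i) s = fact (Suc k)" by (simp only: E) (simp add: algebra_simps)
      then show ?thesis using True by (simp del: funpow.simps)
    next
      case False2: False
      then show ?thesis using False by simp
    qed
  qed
qed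

lemma fd_pow_less: "i < k \<Longrightarrow> (fd ^^ k) (\<lambda>s. (of_nat s :: 'a::field_char_0) ^ i) s = 0"
  by (subst fd_pow_aux) simp
lemma fd_pow_eq: "(fd ^^ k) (\<lambda>s. (of_nat s :: 'a::field_char_0) ^ k) s = fact k"
  by (subst fd_pow_aux) simp

lemma newton: "c j = (\<Sum>k\<le>j. of_nat (j choose k) * (fd ^^ k) c 0)" for c :: "nat \<Rightarrow> 'a::comm_ring_1"
proof (induction j arbitrary: c)
  case 0 then show ?case by simp
next
  case (Suc j)
  define A where "A k = (fd ^^ k) c 0" for k
  have sh: "(fd ^^ k) (\<lambda>t. c (Suc t)) 0 = A k + A (Suc k)" for k
    by (simp add: A_def fd_shift[symmetric] fd_def)
  have "c (Suc j) = (\<Sum>k\<le>j. of_nat (j choose k) * (A k + A (Suc k)))"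
    using Suc.IH[of "\<lambda>t. c (Suc t)"] by (simp add: sh)
  also have "\<dots> = (\<Sum>k\<le>j. of_nat (j choose k) * A k) + (\<Sum>k\<le>j. of_nat (j choose k) * A (Suc k))"
    by (simp add: algebra_simps sum.distrib)
  also have "(\<Sum>k\<le>j. of_nat (j choose k) * A k) = A 0 + (\<Sum>k\<le>j. of_nat (j choose Suc k) * A (Suc k))"
  proof -
    have "(\<Sum>k\<le>Suc j. of_nat (j choose k) * A k) = A 0 + (\<Sum>k\<le>j. of_nat (j choose Suc k) * A (Suc k))"
      by (subst sum.atMost_Suc_shift) simp
    moreover have "(\<Sum>k\<le>Suc j. of_nat (j choose k) * A k) = (\<Sum>k\<le>j. of_nat (j choose k) * A k)"
      by (simp add: binomial_eq_0)
    ultimately show ?thesis by simp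
  qed
  also have "A 0 + (\<Sum>k\<le>j. of_nat (j choose Suc k) * A (Suc k)) + (\<Sum>k\<le>j. of_nat (j choose k) * A (Suc k))
      = (\<Sum>k\<le>Suc j. of_nat (Suc j choose k) * A k)"
    by (subst sum.atMost_Suc_shift) (simp add: sum.distrib algebra_simps binomial_eq_0_iff)
  finally show ?case by (simp add: A_def)
qed



lemma monic_lin_prod: "degree (\<Prod>t<k. [:a t, 1::'a::field:]) = k \<and> lead_coeff (\<Prod>t<k. [:a t, 1::'a:]) = 1"
proof (induction k)
  case 0 then show ?case by simp
next
  case (Suc k)
  have nz: "(\<Prod>t<k. [:a t, 1::'a:]) \<noteq> 0" using Suc by auto
  have e: "(\<Prod>t<Suc k. [:a t, 1::'a:]) = (\<Prod>t<k. [:a t, 1::'a:]) * [:a k, 1:]" by simp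
  have "degree (\<Prod>t<Suc k. [:a t, 1::'a:]) = Suc k"
    by (subst e, subst degree_mult_eq[OF nz]) (use Suc in auto)
  moreover have "lead_coeff ((\<Prod>t<k. [:a t, 1::'a:]) * [:a k, 1:]) = 1"
  proof -
    have l1: "lead_coeff (\<Prod>t<k. [:a t, 1::'a:]) = 1" using Suc by (rule conjunct2)
    have l2: "lead_coeff [:a k, 1::'a:] = 1" by simp
    show ?thesis unfolding lead_coeff_mult l1 l2 by simp
  qed
  then have "lead_coeff (\<Prod>t<Suc k. [:a t, 1::'a:]) = 1" by (simp only: e)
  ultimately show ?case by simp
qed

lemma poly_sum_upto: fixes Q :: "'a::field poly" assumes "degree Q \<le> p" shows "poly Q x = (\<Sum>i\<le>p. coeff Q i * x ^ i)"
proof -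
  have "poly Q x = (\<Sum>i\<le>degree Q. coeff Q i * x ^ i)" by (rule poly_altdef)
  also have "\<dots> = (\<Sum>i\<le>p. coeff Q i * x ^ i)"
    by (rule sum.mono_neutral_left) (use assms in \<open>auto simp: coeff_eq_0\<close>)
  finally show ?thesis .
qed

lemma fd_poly: assumes "degree Q \<le> p"
  shows "(fd ^^ p) (\<lambda>s. poly Q (of_nat s :: 'a::field_char_0)) j = coeff Q p * fact p"
proof -
  have "(fd ^^ p) (\<lambda>s. poly Q (of_nat s :: 'a)) j = (fd ^^ p) (\<lambda>s. \<Sum>i\<le>p. coeff Q i * (of_nat s ^ i)) j"
    using assms by (simp add: poly_sum_upto)
  also have "\<dots> = (\<Sum>i\<le>p. coeff Q i * (fd ^^ p) (\<lambda>s. (of_nat s :: 'a) ^ i) j)"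
    by (rule fd_sum)
  also have "\<dots> = (\<Sum>i<p. coeff Q i * (fd ^^ p) (\<lambda>s. (of_nat s :: 'a) ^ i) j) + coeff Q p * fact p"
    by (simp add: lessThan_Suc_atMost[symmetric] fd_pow_eq)
  also have "(\<Sum>i<p. coeff Q i * (fd ^^ p) (\<lambda>s. (of_nat s :: 'a) ^ i) j) = 0"
    by (simp add: fd_pow_less)
  finally show ?thesis by simp
qed

lemma binom_poly: "poly (smult (inverse (fact k)) (\<Prod>i<k. [:- of_nat i, 1:])) (of_nat j) = (of_nat (j choose k) :: 'a::field_char_0)"
proof -
  have "(\<Prod>i<k. (of_nat j :: 'a) - of_nat i) = fact k * (of_nat j gchoose k)"
    by (simp add: gbinomial_mult_fact atLeast0LessThan)
  then show ?thesis
    by (simp add: poly_prod binomial_gbinomial)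
qed

lemma lemmaA:
  fixes c :: "nat \<Rightarrow> 'a::field_char_0"
  assumes low: "\<And>s. s < m \<Longrightarrow> c s = 0" and high: "\<And>s. n < s \<Longrightarrow> c s = 0"
    and pm: "p < 2 * m" and pn: "p < n + m"
    and rec: "\<And>j. j + p + 1 \<le> n + m \<Longrightarrow> (fd ^^ (p + 1)) c j = 0"
  shows "(fd ^^ p) c 0 = 0"
proof (cases "n < m")
  case True
  then have "c s = 0" for s using low high by (cases "s < m") auto
  then have "(fd ^^ p) c 0 = (fd ^^ p) (\<lambda>_. 0::'a) 0" by (intro fd_local) auto
  then show ?thesis by (simp add: fd_zero)
next
  case False
  define A where "A k = (fd ^^ k) c 0" for k
  have A0: "A k = 0" if "p < k" "k \<le> n + m" for k
  proof -
    have kk: "k = (k - (p + 1)) + (p + 1)" using that by simp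
    have "A k = (fd ^^ ((k - (p + 1)) + (p + 1))) c 0" unfolding A_def using kk by metis
    also have "\<dots> = (fd ^^ (k - (p + 1))) ((fd ^^ (p + 1)) c) 0"
      by (simp only: funpow_add o_apply)
    also have "\<dots> = (fd ^^ (k - (p + 1))) (\<lambda>_. 0::'a) 0"
      by (rule fd_local) (use that rec in auto)
    finally show ?thesis by (simp add: fd_zero)
  qed
  have N: "c j = (\<Sum>k\<le>p. of_nat (j choose k) * A k)" if "j \<le> n + m" for j
  proof -
    have "c j = (\<Sum>k\<le>j. of_nat (j choose k) * A k)" unfolding A_def by (rule newton)
    also have "\<dots> = (\<Sum>k\<le>n + m. of_nat (j choose k) * A k)"
      by (rule sum.mono_neutral_left) (use that in \<open>auto simp: binomial_eq_0\<close>)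
    also have "\<dots> = (\<Sum>k\<le>p. of_nat (j choose k) * A k)"
      by (rule sum.mono_neutral_right) (use pn A0 in auto)
    finally show ?thesis .
  qed
  define Q where "Q = (\<Sum>k\<le>p. smult (A k) (smult (inverse (fact k)) (\<Prod>i<k. [:- of_nat i, 1::'a:])))"
  have PQ: "poly Q (of_nat j) = c j" if "j \<le> n + m" for j
    using N[OF that] by (simp add: Q_def poly_sum binom_poly[symmetric] del: poly_smult) (simp add: ac_simps)
  have dQ: "degree Q \<le> p"
    unfolding Q_def
  proof (rule degree_sum_le)
    fix k assume k: "k \<in> {..p}"
    have "degree (\<Prod>i<k. [:- of_nat i, 1::'a:]) = k" using monic_lin_prod[of "\<lambda>i. - of_nat i" k] by (rule conjunct1)
    then show "degree (smult (A k) (smult (inverse (fact k)) (\<Prod>i<k. [:- of_nat i, 1::'a:]))) \<le> p"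
      using k by (metis atMost_iff degree_smult_le order_trans)
  qed simp
  have Q0: "Q = 0"
  proof (rule ccontr)
    assume nz: "Q \<noteq> 0"
    define S where "S = {..<m} \<union> {n+1..n+m}"
    have cardS: "card S = 2 * m"
    proof -
      have "card S = card {..<m} + card {n+1..n+m}"
        unfolding S_def using False by (intro card_Un_disjoint) auto
      then show ?thesis by simp
    qed
    have sub: "(of_nat :: nat \<Rightarrow> 'a) ` S \<subseteq> {x. poly Q x = 0}"
    proof
      fix x assume "x \<in> (of_nat :: nat \<Rightarrow> 'a) ` S"
      then obtain j where j: "j \<in> S" "x = of_nat j" by auto
      then have "j \<le> n + m" "c j = 0" using low high unfolding S_def by auto
      then show "x \<in> {x. poly Q x = 0}" using PQ j by auto
    qed
    have c1: "card ((of_nat :: nat \<Rightarrow> 'a) ` S) = 2 * m"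
      using cardS by (simp add: card_image inj_on_def)
    have c2: "card ((of_nat :: nat \<Rightarrow> 'a) ` S) \<le> card {x. poly Q x = 0}"
      by (rule card_mono[OF poly_roots_finite[OF nz] sub])
    have c3: "card {x. poly Q x = 0} \<le> degree Q" by (rule card_poly_roots_bound[OF nz])
    show False using c1 c2 c3 dQ pm by linarith
  qed
  have "(fd ^^ p) c 0 = (fd ^^ p) (\<lambda>_. 0::'a) 0"
    by (rule fd_local) (use PQ Q0 pn in auto)
  then show ?thesis by (simp add: fd_zero)
qed



definition diag :: "('k::field poly \<Rightarrow> 'k poly) \<Rightarrow> nat \<Rightarrow> nat \<Rightarrow> 'k" where
  "diag d m s = (if m \<le> s then mat d (s - m) s else 0)"

lemma diag_low: "s < m \<Longrightarrow> diag d m s = 0" by (simp add: diag_def)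

lemma diag_lemma:
  assumes d: "d \<in> EndO n"
  shows "m \<le> j + k \<Longrightarrow> mat ((adx n ^^ k) d) (j + k - m) j
     = (if j + k \<le> n + m then (-1) ^ k * (fd ^^ k) (diag d m) j else 0)"
proof (induction k arbitrary: j)
  case 0
  then show ?case using mat_out_row[OF d, of "j - m" j] by (auto simp: diag_def)
next
  case (Suc k)
  define e where "e = (adx n ^^ k) d"
  have e: "e \<in> EndO n" unfolding e_def using d by (rule adx_pow_EndO)
  define F where "F = (fd ^^ k) (diag d m)"
  have FS: "(fd ^^ Suc k) (diag d m) j = F (Suc j) - F j" by (simp only: F_def fd_Suc)
  have IH1: "mat e ((Suc j) + k - m) (Suc j) = (if Suc j + k \<le> n + m then (-1) ^ k * F (Suc j) else 0)"
    using Suc.IH[of "Suc j"] Suc.prems by (simp add: e_def F_def)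
  have LHS: "mat ((adx n ^^ Suc k) d) (j + Suc k - m) j
     = (if 0 < j + Suc k - m \<and> j + Suc k - m \<le> n then mat e (j + Suc k - m - 1) j else 0) - mat e (j + Suc k - m) (Suc j)"
    using mat_adx[OF e] by (simp add: e_def)
  show ?case
  proof (cases "m \<le> j + k")
    case True
    have IH0: "mat e (j + k - m) j = (if j + k \<le> n + m then (-1) ^ k * F j else 0)"
      using Suc.IH[OF True] by (simp add: e_def F_def)
    have i1: "j + Suc k - m - 1 = j + k - m" "j + Suc k - m = Suc j + k - m" using True by auto
    show ?thesis
    proof (cases "j + Suc k \<le> n + m")
      case True2: True
      have "mat ((adx n ^^ Suc k) d) (j + Suc k - m) j = mat e (j + k - m) j - mat e (Suc j + k - m) (Suc j)"
        using LHS i1 True True2 by simp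
      also have "\<dots> = (-1) ^ k * F j - (-1) ^ k * F (Suc j)" using IH0 IH1 True2 by simp
      also have "\<dots> = (-1) ^ (Suc k) * (fd ^^ Suc k) (diag d m) j" unfolding FS by (simp add: algebra_simps)
      finally show ?thesis unfolding if_P[OF True2] .
    next
      case False
      then show ?thesis using True LHS IH0 IH1 i1 by auto
    qed
  next
    case False
    then have m: "m = j + Suc k" using Suc.prems by simp
    have F0: "F j = 0" unfolding F_def by (rule fd_low[of m]) (use m in \<open>auto simp: diag_low\<close>)
    have "j + Suc k - m = Suc j + k - m" using m by simp
    then show ?thesis using LHS IH1 m FS F0 by auto
  qed
qed

definition supp_le :: "nat \<Rightarrow> ('k::field poly \<Rightarrow> 'k poly) \<Rightarrow> bool" where
  "supp_le t d = (\<forall>i j. j + t < i \<longrightarrow> mat d i j = 0)"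

lemma supp_adx: "d \<in> EndO n \<Longrightarrow> supp_le t d \<Longrightarrow> supp_le (Suc t) (adx n d)"
  unfolding supp_le_def by (simp add: mat_adx)

lemma supp_adx_pow: "d \<in> EndO n \<Longrightarrow> supp_le t d \<Longrightarrow> supp_le (t + k) ((adx n ^^ k) d)"
  by (induction k) (auto intro: supp_adx adx_pow_EndO)

lemma poly_monom_sum: assumes "q \<in> On n" shows "q = (\<Sum>j\<le>n. smult (coeff q j) (monom 1 j))"
proof -
  have "q = (\<Sum>i\<le>degree q. monom (coeff q i) i)" by (simp add: poly_as_sum_of_monoms)
  also have "\<dots> = (\<Sum>i\<le>n. monom (coeff q i) i)"
    by (rule sum.mono_neutral_left) (use assms in \<open>auto simp: coeff_eq_0 On_def\<close>)
  finally show ?thesis by (simp add: smult_monom)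
qed

lemma EndO_ext:
  assumes d: "d \<in> EndO n" and d': "d' \<in> EndO n" and eq: "\<And>i j. mat d i j = mat d' i j"
  shows "d = d'"
proof
  fix q
  show "d q = d' q"
  proof (cases "q \<in> On n")
    case True
    have col: "d (monom 1 j) = d' (monom 1 j)" for j
      using eq by (intro poly_eqI) (simp add: mat_def)
    have "d q = (\<Sum>j\<le>n. smult (coeff q j) (d (monom 1 j)))"
      by (subst poly_monom_sum[OF True], rule EndO_sum[OF d]) (auto intro: On_monom)
    also have "\<dots> = (\<Sum>j\<le>n. smult (coeff q j) (d' (monom 1 j)))" by (simp add: col)
    also have "\<dots> = d' q"
      by (subst (2) poly_monom_sum[OF True], rule EndO_sum[OF d', symmetric]) (auto intro: On_monom)
    finally show ?thesis .
  qed (use EndO_out[OF d] EndO_out[OF d'] in simp)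
qed



lemma M_mod: "M n (g mod monom 1 (Suc n)) = M n (g::'k::field poly)"
  by (rule ext) (simp add: M_def mulO_def mod_simps)

lemma Mx_pow: "q \<in> On n \<Longrightarrow> (M n [:0,1:] ^^ k) q = M n (monom 1 k) (q::'k::field poly)"
proof (induction k)
  case 0 then show ?case by (simp add: M_in mulO_def mulO_id)
next
  case (Suc k)
  have "(M n [:0,1:] ^^ Suc k) q = M n [:0,1:] (M n (monom 1 k) q)" using Suc by simp
  also have "\<dots> = M n (mulO n [:0,1:] (monom 1 k)) q" by (rule M_mult)
  also have "\<dots> = M n ([:0,1:] * monom 1 k) q" by (simp add: mulO_def M_mod)
  also have "[:0,1:] * monom 1 k = (monom 1 (Suc k) :: 'k poly)"
    by (simp add: monom_Suc)
  finally show ?case .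
qed

lemma M_expand: assumes q: "q \<in> On n"
  shows "M n f q = (\<Sum>k\<le>degree f. smult (coeff f k) (M n (monom 1 k) (q::'k::field poly)))"
proof (rule poly_eqI)
  fix i
  have f: "f * q = (\<Sum>k\<le>degree f. monom (coeff f k) k * q)"
    by (subst (1) poly_as_sum_of_monoms[symmetric]) (simp add: sum_distrib_right)
  show "coeff (M n f q) i = coeff (\<Sum>k\<le>degree f. smult (coeff f k) (M n (monom 1 k) q)) i"
    using q by (auto simp: M_in coeff_mulO coeff_sum f coeff_monom_mult intro!: sum.cong)
qed

lemma comm_zero:
  fixes e :: "'k::field poly \<Rightarrow> 'k poly"
  assumes e: "e \<in> EndO n" and z: "adx n e = (\<lambda>_. 0)"
  shows "comm (M n f) e = (\<lambda>_. 0)"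
proof
  fix q :: "'k poly"
  have c1: "M n [:0,1:] (e q) = e (M n [:0,1:] q)" for q
    using fun_cong[OF z, of q] by (simp add: adx_def comm_def)
  have ck: "(M n [:0,1:] ^^ k) (e q) = e ((M n [:0,1:] ^^ k) q)" for k q
    by (induction k) (simp_all add: c1)
  show "comm (M n f) e q = 0"
  proof (cases "q \<in> On n")
    case True
    have eq: "e q \<in> On n" by (rule EndO_On[OF e])
    have "e (M n f q) = e (\<Sum>k\<le>degree f. smult (coeff f k) ((M n [:0,1:] ^^ k) q))"
      using True by (simp add: M_expand Mx_pow)
    also have "\<dots> = (\<Sum>k\<le>degree f. smult (coeff f k) (e ((M n [:0,1:] ^^ k) q)))"
      by (rule EndO_sum[OF e]) (use True in \<open>auto simp: Mx_pow M_On\<close>)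
    also have "\<dots> = (\<Sum>k\<le>degree f. smult (coeff f k) ((M n [:0,1:] ^^ k) (e q)))"
      by (simp add: ck)
    also have "\<dots> = M n f (e q)"
      using eq by (simp add: M_expand Mx_pow)
    finally show ?thesis by (simp add: comm_def)
  next
    case False
    then show ?thesis using e by (simp add: comm_def EndO_out EndO_zero M_out)
  qed
qed

lemma comm_adx:
  fixes e :: "'k::field poly \<Rightarrow> 'k poly"
  assumes e: "e \<in> EndO n"
  shows "comm (M n f) (adx n e) = adx n (comm (M n f) e)"
proof
  fix q :: "'k poly"
  have Mf: "M n f \<in> EndO n" and Mx: "M n [:0,1:] \<in> EndO n" by (rule M_EndO)+
  have A: "comm (M n f) (adx n e) q
      = M n f (M n [:0,1:] (e q)) - M n f (e (M n [:0,1:] q)) - M n [:0,1:] (e (M n f q)) + e (M n [:0,1:] (M n f q))"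
    by (simp add: adx_def comm_def EndO_diff[OF Mf] EndO_On[OF e] M_On)
  have B: "adx n (comm (M n f) e) q
      = M n [:0,1:] (M n f (e q)) - M n [:0,1:] (e (M n f q)) - M n f (e (M n [:0,1:] q)) + e (M n f (M n [:0,1:] q))"
    by (simp add: adx_def comm_def EndO_diff[OF Mx] EndO_On[OF e] M_On)
  have C: "M n f (M n [:0,1:] (e q)) - M n f (e (M n [:0,1:] q)) - M n [:0,1:] (e (M n f q)) + e (M n [:0,1:] (M n f q))
     = M n [:0,1:] (M n f (e q)) - M n [:0,1:] (e (M n f q)) - M n f (e (M n [:0,1:] q)) + e (M n f (M n [:0,1:] q))"
    by (simp only: M_comm[of n f "[:0,1:]"]) (simp add: algebra_simps)
  show "comm (M n f) (adx n e) q = adx n (comm (M n f) e) q"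
    by (simp only: A B C)
qed

lemma comm_adx_pow:
  assumes e: "e \<in> EndO n"
  shows "(adx n ^^ k) (comm (M n f) e) = comm (M n f) ((adx n ^^ k) e)"
proof (induction k)
  case 0 then show ?case by simp
next
  case (Suc k)
  then show ?case using comm_adx[OF adx_pow_EndO[OF e, of k]] by simp
qed

lemma foldr_zero:
  "\<forall>d. d \<in> EndO n \<longrightarrow> (adx n ^^ length fs) d = (\<lambda>_. 0) \<longrightarrow> foldr (\<lambda>f e. comm (M n f) e) fs d = (\<lambda>_. 0)"
proof (induction fs rule: rev_induct)
  case Nil then show ?case by simp
next
  case (snoc f fs)
  show ?case
  proof (intro allI impI)
    fix d :: "'a poly \<Rightarrow> 'a poly"
    assume d: "d \<in> EndO n" and z: "(adx n ^^ length (fs @ [f])) d = (\<lambda>_. 0)"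
    have e: "(adx n ^^ length fs) d \<in> EndO n" by (rule adx_pow_EndO[OF d])
    have "adx n ((adx n ^^ length fs) d) = (\<lambda>_. 0)" using z by simp
    then have "comm (M n f) ((adx n ^^ length fs) d) = (\<lambda>_. 0)" by (rule comm_zero[OF e])
    then have "(adx n ^^ length fs) (comm (M n f) d) = (\<lambda>_. 0)" by (simp add: comm_adx_pow[OF d])
    moreover have "comm (M n f) d \<in> EndO n" by (rule comm_EndO[OF M_EndO d])
    ultimately show "foldr (\<lambda>f e. comm (M n f) e) (fs @ [f]) d = (\<lambda>_. 0)"
      using snoc by simp
  qed
qed

lemma Dp_I: assumes d: "d \<in> EndO n" and z: "(adx n ^^ Suc p) d = (\<lambda>_. 0)" shows "d \<in> Dp n p"
  unfolding Dp_def
proof (intro CollectI conjI allI impI)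
  fix fs :: "'a poly list" assume fs: "length fs = p + 1 \<and> set fs \<subseteq> On n"
  then show "foldr (\<lambda>f e. comm (M n f) e) fs d = (\<lambda>_. 0)"
    using foldr_zero[of n fs] d z by simp
qed (rule d)

lemma adx_eq: "adx n = comm (M n [:0,1:])" by (rule ext) (simp add: adx_def)

lemma foldr_rep: "foldr (\<lambda>f e. comm (M n f) e) (replicate k [:0,1:]) d = (adx n ^^ k) d"
  by (induction k) (simp_all add: adx_def)

lemma Dp_D: assumes "0 < n" "d \<in> Dp n p" shows "(adx n ^^ Suc p) d = (\<lambda>_. 0)"
proof -
  have x: "[:0,1:] \<in> On n" using assms(1) by (simp add: On_def)
  have all: "\<forall>fs. length fs = p + 1 \<and> set fs \<subseteq> On n \<longrightarrow> foldr (\<lambda>f e. comm (M n f) e) fs d = (\<lambda>_. 0)"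
    using assms(2) unfolding Dp_def by blast
  have "foldr (\<lambda>f e. comm (M n f) e) (replicate (Suc p) [:0,1:]) d = (\<lambda>_. 0)"
  proof -
    have s: "set (replicate (Suc p) [:0,1:]) \<subseteq> On n" using x by (auto simp del: replicate.simps)
    show ?thesis using all s by (metis Suc_eq_plus1 length_replicate)
  qed
  then show ?thesis by (simp only: foldr_rep)
qed



lemma idealO_char: assumes "l \<le> n"
  shows "idealO n l = {g \<in> On n. \<forall>i<l. coeff g i = (0::'k::field)}"
proof
  show "idealO n l \<subseteq> {g \<in> On n. \<forall>i<l. coeff g i = (0::'k::field)}"
    by (auto simp: idealO_def mulO_On coeff_mulO coeff_monom_mult)
next
  show "{g \<in> On n. \<forall>i<l. coeff g i = (0::'k::field)} \<subseteq> idealO n l"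
  proof
    fix g :: "'k poly" assume g: "g \<in> {g \<in> On n. \<forall>i<l. coeff g i = 0}"
    define h where "h = poly_shift l g"
    have hO: "h \<in> On n"
      by (rule On_coeffI) (use g in \<open>auto simp: h_def coeff_poly_shift On_def coeff_eq_0\<close>)
    have "monom 1 l * h = g"
    proof (rule poly_eqI)
      fix i show "coeff (monom 1 l * h) i = coeff g i"
        using g by (auto simp: coeff_monom_mult h_def coeff_poly_shift)
    qed
    then have "mulO n (monom 1 l) h = g" using g by (simp add: mulO_def mulO_id)
    then show "g \<in> idealO n l" using hO unfolding idealO_def by blast
  qed
qed

lemma idealO_inj: assumes "v \<le> n" "l \<le> n" "idealO n v = (idealO n l :: 'k::field poly set)"
  shows "v = l"
proof (rule ccontr)
  have mem: "monom (1::'k) a \<in> idealO n a" if "a \<le> n" for a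
    using that by (auto simp: idealO_char On_monom coeff_monom)
  assume "v \<noteq> l"
  then consider "v < l" | "l < v" by linarith
  then show False
  proof cases
    case 1
    then have "monom (1::'k) v \<in> idealO n l" using mem[OF assms(1)] assms(3) by simp
    then show False using 1 assms(2) by (auto simp: idealO_char)
  next
    case 2
    then have "monom (1::'k) l \<in> idealO n v" using mem[OF assms(2)] assms(3) by simp
    then show False using 2 assms(1) by (auto simp: idealO_char)
  qed
qed

lemma vexp_eq: assumes "l \<le> n" "adx_image n p = (idealO n l :: 'k::field poly set)"
  shows "vexp TYPE('k) n p = l"
  unfolding vexp_def
proof (rule the_equality)
  show "l \<le> n \<and> adx_image n p = (idealO n l :: 'k poly set)" using assms by simp
next
  fix v assume "v \<le> n \<and> adx_image n p = (idealO n v :: 'k poly set)"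
  then show "v = l" using assms idealO_inj[of v n l] by auto
qed

lemma mat_M: "mat (M n g) i j = (if j \<le> n \<and> i \<le> n then coeff (g * monom 1 j) i else (0::'k::field))"
proof (cases "j \<le> n")
  case True
  then show ?thesis by (simp add: mat_def M_in[OF On_monom[OF True]] coeff_mulO)
next
  case False
  then show ?thesis by (simp add: mat_def M_out[OF monom_notin_On])
qed

lemma upper:
  fixes g :: "'k::field_char_0 poly"
  assumes n: "0 < n" and lp: "l \<le> p" and pl: "2 * l \<le> p + 1" and ln: "l \<le> n"
    and d: "d \<in> Dp n p" and dg: "(adx n ^^ p) d = M n g" and g: "g \<in> On n"
  shows "g \<in> idealO n l"
proof -
  have dE: "d \<in> EndO n" using d by (simp add: Dp_def)
  have z: "(adx n ^^ Suc p) d = (\<lambda>_. 0)" by (rule Dp_D[OF n d])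
  have "coeff g i = 0" if i: "i < l" for i
  proof -
    define m where "m = p - i"
    define c where "c = diag d m"
    have "coeff g i = mat (M n g) i 0" using g i ln by (simp add: mat_M)
    also have "\<dots> = mat ((adx n ^^ p) d) (0 + p - m) 0" using i lp by (simp add: dg m_def)
    also have "\<dots> = (if 0 + p \<le> n + m then (-1) ^ p * (fd ^^ p) c 0 else 0)"
      unfolding c_def by (rule diag_lemma[OF dE]) (simp add: m_def)
    also have "(fd ^^ p) c 0 = 0"
    proof (rule lemmaA[where m = m and n = n])
      show "\<And>s. s < m \<Longrightarrow> c s = 0" by (simp add: c_def diag_low)
      show "\<And>s. n < s \<Longrightarrow> c s = 0" by (simp add: c_def diag_def mat_out_col[OF dE])
      show "p < 2 * m" using i pl lp by (simp add: m_def)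
      show "p < n + m" using i ln lp by (simp add: m_def)
      fix j assume j: "j + p + 1 \<le> n + m"
      have "mat ((adx n ^^ Suc p) d) (j + Suc p - m) j = (if j + Suc p \<le> n + m then (-1) ^ Suc p * (fd ^^ Suc p) c j else 0)"
        unfolding c_def by (rule diag_lemma[OF dE]) (use i lp in \<open>simp add: m_def\<close>)
      then have "(-1) ^ Suc p * (fd ^^ Suc p) c j = 0" using j z by (simp add: mat_def del: funpow.simps)
      then show "(fd ^^ (p + 1)) c j = 0" by simp
    qed
    finally show ?thesis by simp
  qed
  then show ?thesis using g ln by (simp add: idealO_char)
qed



lemma comp_M_EndO: fixes e :: "'k::field poly \<Rightarrow> 'k poly" assumes e: "e \<in> EndO n" shows "(\<lambda>q. M n h (e q)) \<in> EndO n"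
  unfolding EndO_def
proof (intro CollectI conjI ballI allI impI)
  have Mh: "M n h \<in> EndO n" by (rule M_EndO)
  fix p q :: "'k poly" assume "p \<in> On n" "q \<in> On n"
  then show "M n h (e (p + q)) = M n h (e p) + M n h (e q)"
    using e by (simp add: EndO_add[OF e] EndO_add[OF Mh] EndO_On)
next
  have Mh: "M n h \<in> EndO n" by (rule M_EndO)
  fix c and p :: "'k poly" assume "p \<in> On n"
  then show "M n h (e (smult c p)) = smult c (M n h (e p))"
    using e by (simp add: EndO_smult[OF e] EndO_smult[OF Mh] EndO_On)
qed (auto simp: M_On EndO_out[OF e])

lemma adx_comp: assumes e: "e \<in> EndO n"
  shows "adx n (\<lambda>q. M n h (e q)) = (\<lambda>q. M n h (adx n e q))"
proof
  fix q
  have Mh: "M n h \<in> EndO n" by (rule M_EndO)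
  show "adx n (\<lambda>q. M n h (e q)) q = M n h (adx n e q)"
    by (simp add: adx_def comm_def EndO_diff[OF Mh] M_On EndO_On[OF e] M_comm[of n "[:0,1:]" h])
qed

lemma adx_comp_pow: assumes e: "e \<in> EndO n"
  shows "(adx n ^^ k) (\<lambda>q. M n h (e q)) = (\<lambda>q. M n h ((adx n ^^ k) e q))"
proof (induction k)
  case 0 then show ?case by simp
next
  case (Suc k)
  then show ?case using adx_comp[OF adx_pow_EndO[OF e, of k], of h] by simp
qed

lemma lower:
  fixes h :: "'k::field_char_0 poly"
  assumes lp: "l \<le> p" and pl: "p \<le> 2 * l" and h: "h \<in> On n"
  shows "mulO n (monom 1 l) h \<in> adx_image n p"
proof -
  define m0 where "m0 = p - l"
  define r where "r t = (if t < m0 then t else n + 1 + t - m0)" for t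
  define K :: 'k where "K = (-1) ^ p * fact p"
  define P where "P = (\<Prod>t<p. [:- of_nat (r t), 1::'k:])"
  define Q where "Q = smult (inverse K) P"
  define \<gamma> where "\<gamma> s = poly Q (of_nat s)" for s
  define d0 where "d0 q = (if q \<in> On n then (\<Sum>j\<in>{m0..n}. monom (coeff q j * \<gamma> j) (j - m0)) else 0)" for q
  have K0: "K \<noteq> 0" by (simp add: K_def)
  have Pdeg: "degree P = p" and Plc: "lead_coeff P = 1"
    unfolding P_def using monic_lin_prod[of "\<lambda>t. - of_nat (r t)" p] by auto
  have coeff_d0: "coeff (d0 q) i = (if i + m0 \<le> n then coeff q (i + m0) * \<gamma> (i + m0) else 0)"
    if q: "q \<in> On n" for q i
  proof -
    have "coeff (d0 q) i = (\<Sum>j\<in>{m0..n}. (if j - m0 = i then coeff q j * \<gamma> j else 0))"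
      using q by (simp add: d0_def coeff_sum coeff_monom)
    also have "\<dots> = (\<Sum>j\<in>{m0..n}. (if j = i + m0 then coeff q j * \<gamma> j else 0))"
      by (rule sum.cong) auto
    also have "\<dots> = (if i + m0 \<le> n then coeff q (i + m0) * \<gamma> (i + m0) else 0)"
      by (simp add: sum.delta)
    finally show ?thesis .
  qed
  have d0E: "d0 \<in> EndO n"
    unfolding EndO_def
  proof (intro CollectI conjI ballI allI impI)
    fix q :: "'k poly"
    show "d0 q \<in> On n" unfolding d0_def by (auto intro!: On_sum On_monom)
  next
    fix p q :: "'k poly" assume "p \<in> On n" "q \<in> On n"
    then show "d0 (p + q) = d0 p + d0 q"
      by (intro poly_eqI) (simp add: coeff_d0 On_add algebra_simps)
  next
    fix c and p :: "'k poly" assume "p \<in> On n"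
    then show "d0 (smult c p) = smult c (d0 p)"
      by (intro poly_eqI) (simp add: coeff_d0 On_smult algebra_simps)
  next
    fix p :: "'k poly" assume "p \<notin> On n" then show "d0 p = 0" by (simp add: d0_def)
  qed
  have mat_d0: "mat d0 i j = (if j \<le> n \<and> m0 \<le> j \<and> i = j - m0 then \<gamma> j else 0)" for i j
  proof (cases "j \<le> n")
    case True
    then show ?thesis by (auto simp: mat_def coeff_d0 On_monom coeff_monom)
  next
    case False then show ?thesis by (simp add: mat_out_col[OF d0E])
  qed
  have supp0: "supp_le 0 d0" unfolding supp_le_def by (auto simp: mat_d0)
  have diag_ne: "diag d0 m = (\<lambda>_. 0)" if "m \<noteq> m0" for m
    using that by (auto simp: diag_def mat_d0 fun_eq_iff)
  define c where "c = diag d0 m0"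
  have cg: "c s = \<gamma> s" if s: "s \<le> n + m0" for s
  proof -
    have root: "\<gamma> s = 0" if t: "t < p" "r t = s" for t
    proof -
      have "poly P (of_nat s) = 0" unfolding P_def poly_prod
        using t by (auto intro!: bexI[of _ t])
      then show ?thesis by (simp add: \<gamma>_def Q_def)
    qed
    show ?thesis
    proof (cases "s < m0")
      case True
      then have "\<gamma> s = 0" using root[of s] lp pl by (simp add: r_def m0_def)
      then show ?thesis using True by (simp add: c_def diag_def)
    next
      case False
      show ?thesis
      proof (cases "s \<le> n")
        case True then show ?thesis using False by (simp add: c_def diag_def mat_d0)
      next
        case False2: False
        have "\<gamma> s = 0"
          by (rule root[of "s - n - 1 + m0"]) (use False False2 s lp pl in \<open>auto simp: r_def m0_def\<close>)
        then show ?thesis using False2 by (simp add: c_def diag_def mat_d0)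
      qed
    qed
  qed
  have fdc: "(-1) ^ p * (fd ^^ p) c j = 1" if j: "j + p \<le> n + m0" for j
  proof -
    have "(fd ^^ p) c j = (fd ^^ p) (\<lambda>s. poly Q (of_nat s)) j"
      by (rule fd_local) (use j cg in \<open>auto simp: \<gamma>_def\<close>)
    also have "\<dots> = coeff Q p * fact p"
      by (rule fd_poly) (simp add: Q_def Pdeg)
    also have "coeff Q p = inverse K" using Plc Pdeg by (simp add: Q_def)
    finally have "(fd ^^ p) c j = inverse K * fact p" .
    then show ?thesis using K0 by (simp add: K_def field_simps)
  qed
  have T: "(adx n ^^ p) d0 = M n (monom 1 l)"
  proof (rule EndO_ext[OF adx_pow_EndO[OF d0E] M_EndO])
    fix i j
    have R: "mat (M n (monom 1 l)) i j = (if j \<le> n \<and> i \<le> n \<and> i = l + j then 1 else (0::'k))"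
      by (auto simp: mat_M coeff_monom_mult coeff_monom)
    show "mat ((adx n ^^ p) d0) i j = mat (M n (monom 1 l)) i j"
    proof (cases "j + p < i")
      case True
      have "mat ((adx n ^^ p) d0) i j = 0"
        using supp_adx_pow[OF d0E supp0, of p] True unfolding supp_le_def by simp
      then show ?thesis using True R lp by auto
    next
      case False
      define m where "m = j + p - i"
      have i: "i = j + p - m" "m \<le> j + p" using False by (auto simp: m_def)
      have L: "mat ((adx n ^^ p) d0) i j = (if j + p \<le> n + m then (-1) ^ p * (fd ^^ p) (diag d0 m) j else 0)"
        using diag_lemma[OF d0E i(2)] i(1) by simp
      show ?thesis
      proof (cases "m = m0")
        case True
        then show ?thesis using L R fdc i lp by (auto simp: c_def m0_def)
      next
        case False
        then show ?thesis using L R diag_ne[OF False] i lp by (auto simp: fd_zero m0_def)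
      qed
    qed
  qed
  have T1: "(adx n ^^ Suc p) d0 = (\<lambda>_. 0)"
    by (simp add: T adx_def comm_def M_comm)
  define d where "d = (\<lambda>q. M n h (d0 q))"
  have dE: "d \<in> EndO n" unfolding d_def by (rule comp_M_EndO[OF d0E])
  have dp: "(adx n ^^ p) d = M n (mulO n (monom 1 l) h)"
    unfolding d_def adx_comp_pow[OF d0E] T
    by (rule ext) (simp add: M_mult mulO_def mult.commute)
  have dp1: "(adx n ^^ Suc p) d = (\<lambda>_. 0)"
    unfolding d_def adx_comp_pow[OF d0E] T1 by simp
  have "d \<in> Dp n p" by (rule Dp_I[OF dE dp1])
  then show ?thesis using dp unfolding adx_image_def by (auto simp: mulO_On)
qed

lemma main:
  assumes n: "0 < n" and lp: "l \<le> p" and pl: "p \<le> 2 * l" and pl2: "2 * l \<le> p + 1" and ln: "l \<le> n"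
  shows "vexp TYPE('k::field_char_0) n p = l"
proof (rule vexp_eq[OF ln])
  show "adx_image n p = (idealO n l :: 'k poly set)"
  proof
    show "adx_image n p \<subseteq> (idealO n l :: 'k poly set)"
      unfolding adx_image_def using upper[OF n lp pl2 ln] by blast
  next
    show "(idealO n l :: 'k poly set) \<subseteq> adx_image n p"
      unfolding idealO_def using lower[OF lp pl] by blast
  qed
qed

theorem lemma7:
  fixes n :: nat
  assumes "n > 0"
  shows "\<forall>l \<in> {1..n}. vexp TYPE('k::field_char_0) n (2 * l - 1) = l
                      \<and> vexp TYPE('k) n (2 * l) = l"
proof
  fix l assume l: "l \<in> {1..n}"
  show "vexp TYPE('k::field_char_0) n (2 * l - 1) = l \<and> vexp TYPE('k) n (2 * l) = l"
    using main[OF assms, of l "2 * l - 1"] main[OF assms, of l "2 * l"] l by auto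
qed

end
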